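(* Let $\mathcal H$ be a Hopf algebra, $\mathcal A\subset\mathcal H$ a left coideal subalgebra and $\mu\in\mathcal A'$ a non-zero multiplicative functional on $\mathcal A$. If $\dim L^{\mathcal A}_\mu>0$ or $\dim R^{\mathcal A}_\mu>0$, then $\dim\mathcal A<\infty$.
   Context: $k$ is a field; $\mathcal H$ is a Hopf algebra over $k$ with comultiplication $\Delta$, counit $\varepsilon$ and invertible antipode $S$. A left coideal subalgebra is a subalgebra $\mathcal A\ni 1$ with $\Delta(\mathcal A)\subset\mathcal H\otimes\mathcal A$. A multiplicative functional is a linear $\mu:\mathcal A\to k$ with $\mu(ab)=\mu(a)\mu(b)$. $L^{\mathcal A}_\mu=\{\Lambda\in\mathcal A: a\Lambda=\mu(a)\Lambda\ \forall a\in\mathcal A\}$ and $R^{\mathcal A}_\mu=\{\Lambda\in\mathcal A:\Lambda a=\mu(a)\Lambda\ \forall a\in\mathcal A\}$. *)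

theory Defs
  imports Complex_Main
begin

text \<open>
  Elements of H \<otimes> H are represented by finite lists of pairs (sum of simple tensors);
  elements of H \<otimes> H \<otimes> H by lists of triples.  Two such representatives denote the
  same tensor iff they agree under all products of linear functionals (over a field,
  H' \<otimes> H' separates the points of H \<otimes> H).
\<close>

definition tensor2_eq ::
  "('k::field \<Rightarrow> 'h::ring_1 \<Rightarrow> 'h) \<Rightarrow> ('h \<times> 'h) list \<Rightarrow> ('h \<times> 'h) list \<Rightarrow> bool" where
  "tensor2_eq sc xs ys \<longleftrightarrow>
     (\<forall>\<phi> \<psi>. Vector_Spaces.linear sc ((*)) \<phi> \<longrightarrow> Vector_Spaces.linear sc ((*)) \<psi> \<longrightarrow>
        (\<Sum>(x, y)\<leftarrow>xs. \<phi> x * \<psi> y) = (\<Sum>(x, y)\<leftarrow>ys. \<phi> x * \<psi> y))"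

definition tensor3_eq ::
  "('k::field \<Rightarrow> 'h::ring_1 \<Rightarrow> 'h) \<Rightarrow> ('h \<times> 'h \<times> 'h) list \<Rightarrow> ('h \<times> 'h \<times> 'h) list \<Rightarrow> bool" where
  "tensor3_eq sc xs ys \<longleftrightarrow>
     (\<forall>\<phi> \<psi> \<chi>. Vector_Spaces.linear sc ((*)) \<phi> \<longrightarrow> Vector_Spaces.linear sc ((*)) \<psi> \<longrightarrow>
        Vector_Spaces.linear sc ((*)) \<chi> \<longrightarrow>
        (\<Sum>(x, y, z)\<leftarrow>xs. \<phi> x * \<psi> y * \<chi> z) = (\<Sum>(x, y, z)\<leftarrow>ys. \<phi> x * \<psi> y * \<chi> z))"

definition k_algebra :: "('k::field \<Rightarrow> 'h::ring_1 \<Rightarrow> 'h) \<Rightarrow> bool" where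
  "k_algebra sc \<longleftrightarrow> vector_space sc \<and>
     (\<forall>c a b. sc c (a * b) = sc c a * b \<and> sc c (a * b) = a * sc c b)"

definition hopf_algebra ::
  "('k::field \<Rightarrow> 'h::ring_1 \<Rightarrow> 'h) \<Rightarrow> ('h \<Rightarrow> ('h \<times> 'h) list) \<Rightarrow> ('h \<Rightarrow> 'k) \<Rightarrow> ('h \<Rightarrow> 'h) \<Rightarrow> bool" where
  "hopf_algebra sc D eps S \<longleftrightarrow>
     k_algebra sc \<and>
     \<comment> \<open>D is linear\<close>
     (\<forall>a b. tensor2_eq sc (D (a + b)) (D a @ D b)) \<and>
     (\<forall>c a. tensor2_eq sc (D (sc c a)) (map (\<lambda>(x, y). (sc c x, y)) (D a))) \<and>
     \<comment> \<open>D is a unital algebra homomorphism\<close>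
     (\<forall>a b. tensor2_eq sc (D (a * b)) [(x * x', y * y'). (x, y) \<leftarrow> D a, (x', y') \<leftarrow> D b]) \<and>
     tensor2_eq sc (D 1) [(1, 1)] \<and>
     \<comment> \<open>coassociativity\<close>
     (\<forall>a. tensor3_eq sc
            (concat (map (\<lambda>(x, y). map (\<lambda>(u, v). (u, v, y)) (D x)) (D a)))
            (concat (map (\<lambda>(x, y). map (\<lambda>(u, v). (x, u, v)) (D y)) (D a)))) \<and>
     \<comment> \<open>counit: linear, unital, multiplicative, counit axioms\<close>
     Vector_Spaces.linear sc ((*)) eps \<and>
     eps 1 = 1 \<and> (\<forall>a b. eps (a * b) = eps a * eps b) \<and>
     (\<forall>a. (\<Sum>(x, y)\<leftarrow>D a. sc (eps x) y) = a) \<and>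
     (\<forall>a. (\<Sum>(x, y)\<leftarrow>D a. sc (eps y) x) = a) \<and>
     \<comment> \<open>antipode: linear, antipode axioms, invertible\<close>
     Vector_Spaces.linear sc sc S \<and>
     (\<forall>a. (\<Sum>(x, y)\<leftarrow>D a. S x * y) = sc (eps a) 1) \<and>
     (\<forall>a. (\<Sum>(x, y)\<leftarrow>D a. x * S y) = sc (eps a) 1) \<and>
     bij S"

definition left_coideal_subalgebra ::
  "('k::field \<Rightarrow> 'h::ring_1 \<Rightarrow> 'h) \<Rightarrow> ('h \<Rightarrow> ('h \<times> 'h) list) \<Rightarrow> 'h set \<Rightarrow> bool" where
  "left_coideal_subalgebra sc D A \<longleftrightarrow>
     module.subspace sc A \<and> 1 \<in> A \<and> (\<forall>a\<in>A. \<forall>b\<in>A. a * b \<in> A) \<and>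
     (\<forall>a\<in>A. \<exists>ts. tensor2_eq sc (D a) ts \<and> (\<forall>(x, y)\<in>set ts. y \<in> A))"

definition multiplicative_functional ::
  "('k::field \<Rightarrow> 'h::ring_1 \<Rightarrow> 'h) \<Rightarrow> 'h set \<Rightarrow> ('h \<Rightarrow> 'k) \<Rightarrow> bool" where
  "multiplicative_functional sc A \<mu> \<longleftrightarrow>
     (\<forall>a\<in>A. \<forall>b\<in>A. \<mu> (a + b) = \<mu> a + \<mu> b) \<and>
     (\<forall>c. \<forall>a\<in>A. \<mu> (sc c a) = c * \<mu> a) \<and>
     (\<forall>a\<in>A. \<forall>b\<in>A. \<mu> (a * b) = \<mu> a * \<mu> b)"

definition L_space :: "('k::field \<Rightarrow> 'h::ring_1 \<Rightarrow> 'h) \<Rightarrow> 'h set \<Rightarrow> ('h \<Rightarrow> 'k) \<Rightarrow> 'h set" where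
  "L_space sc A \<mu> = {\<Lambda>\<in>A. \<forall>a\<in>A. a * \<Lambda> = sc (\<mu> a) \<Lambda>}"

definition R_space :: "('k::field \<Rightarrow> 'h::ring_1 \<Rightarrow> 'h) \<Rightarrow> 'h set \<Rightarrow> ('h \<Rightarrow> 'k) \<Rightarrow> 'h set" where
  "R_space sc A \<mu> = {\<Lambda>\<in>A. \<forall>a\<in>A. \<Lambda> * a = sc (\<mu> a) \<Lambda>}"

definition finite_dim :: "('k::field \<Rightarrow> 'h::ring_1 \<Rightarrow> 'h) \<Rightarrow> 'h set \<Rightarrow> bool" where
  "finite_dim sc V \<longleftrightarrow> (\<exists>B. finite B \<and> B \<subseteq> V \<and> module.span sc B = V)"

end

theory Submission
  imports Defs
begin


lemma sum_list_concat_map: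
  "sum_list (map g (concat (map h l))) = sum_list (map (\<lambda>t. sum_list (map g (h t))) l)"
  by (induction l) auto

lemma sum_list_swap:
  fixes f :: "'a \<Rightarrow> 'b \<Rightarrow> 'c::comm_monoid_add"
  shows "(\<Sum>x\<leftarrow>xs. \<Sum>y\<leftarrow>ys. f x y) = (\<Sum>y\<leftarrow>ys. \<Sum>x\<leftarrow>xs. f x y)"
  by (induction xs) (auto simp: sum_list_addf)

lemma sum_list_sum_swap:
  fixes f :: "'a \<Rightarrow> 'b \<Rightarrow> 'c::comm_monoid_add"
  shows "(\<Sum>x\<leftarrow>xs. \<Sum>y\<in>F. f x y) = (\<Sum>y\<in>F. \<Sum>x\<leftarrow>xs. f x y)"
  by (induction xs) (auto simp: sum.distrib)

lemma additive_sum_list: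
  fixes g :: "'a::ab_group_add \<Rightarrow> 'b::ab_group_add"
  assumes "\<And>x y. g (x + y) = g x + g y"
  shows "g (\<Sum>t\<leftarrow>l. h t) = (\<Sum>t\<leftarrow>l. g (h t))"
proof -
  have g0: "g 0 = 0" using assms[of 0 0] by simp
  show ?thesis by (induction l) (auto simp: g0 assms)
qed

lemma additive_sum:
  fixes g :: "'a::ab_group_add \<Rightarrow> 'b::ab_group_add"
  assumes "\<And>x y. g (x + y) = g x + g y"
  shows "g (\<Sum>t\<in>F. h t) = (\<Sum>t\<in>F. g (h t))"
proof -
  have g0: "g 0 = 0" using assms[of 0 0] by simp
  show ?thesis by (induction F rule: infinite_finite_induct) (auto simp: g0 assms)
qed

definition lin :: "('k::field \<Rightarrow> 'h::ring_1 \<Rightarrow> 'h) \<Rightarrow> ('h \<Rightarrow> 'h) \<Rightarrow> bool" where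
  "lin sc f \<longleftrightarrow> (\<forall>x y. f (x + y) = f x + f y) \<and> (\<forall>c x. f (sc c x) = sc c (f x))"

locale hopf =
  fixes sc :: "'k::field \<Rightarrow> 'h::ring_1 \<Rightarrow> 'h" and D :: "'h \<Rightarrow> ('h \<times> 'h) list"
    and eps :: "'h \<Rightarrow> 'k" and S :: "'h \<Rightarrow> 'h"
  assumes hopf: "hopf_algebra sc D eps S"
begin

lemma kalg: "k_algebra sc" using hopf unfolding hopf_algebra_def by auto

lemma vs: "vector_space sc" using kalg unfolding k_algebra_def by auto

sublocale V: vector_space sc by (rule vs)

lemma sc_mult_left: "sc c (a * b) = sc c a * b" using kalg unfolding k_algebra_def by blast
lemma sc_mult_right: "sc c (a * b) = a * sc c b" using kalg unfolding k_algebra_def by blast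

abbreviation flin :: "('h \<Rightarrow> 'k) \<Rightarrow> bool" where "flin \<phi> \<equiv> Vector_Spaces.linear sc (*) \<phi>"

lemma flin_add: assumes "flin \<phi>" shows "\<phi> (x + y) = \<phi> x + \<phi> y"
  using assms[unfolded Vector_Spaces.linear_iff] by blast
lemma flin_scale: assumes "flin \<phi>" shows "\<phi> (sc c x) = c * \<phi> x"
  using assms[unfolded Vector_Spaces.linear_iff] by blast
lemma flin_sum_list: "flin \<phi> \<Longrightarrow> \<phi> (\<Sum>t\<leftarrow>l. h t) = (\<Sum>t\<leftarrow>l. \<phi> (h t))"
  by (rule additive_sum_list) (rule flin_add)
lemma flin_sum: "flin \<phi> \<Longrightarrow> \<phi> (\<Sum>t\<in>F. h t) = (\<Sum>t\<in>F. \<phi> (h t))"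
  by (rule additive_sum) (rule flin_add)

lemma lin_add: "lin sc f \<Longrightarrow> f (x + y) = f x + f y" unfolding lin_def by auto
lemma lin_scale: "lin sc f \<Longrightarrow> f (sc c x) = sc c (f x)" unfolding lin_def by auto
lemma lin_sum_list: "lin sc f \<Longrightarrow> f (\<Sum>t\<leftarrow>l. h t) = (\<Sum>t\<leftarrow>l. f (h t))"
  by (rule additive_sum_list) (rule lin_add)
lemma lin_sum: "lin sc f \<Longrightarrow> f (\<Sum>t\<in>F. h t) = (\<Sum>t\<in>F. f (h t))"
  by (rule additive_sum) (rule lin_add)

definition B0 where "B0 = V.extend_basis {}"
lemma B0: "V.independent B0" "V.span B0 = UNIV"
  using V.independent_extend_basis[OF V.independent_empty] V.span_extend_basis[OF V.independent_empty]
  unfolding B0_def by auto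

definition rep :: "'h \<Rightarrow> 'h \<Rightarrow> 'k" where "rep x b = V.representation B0 x b"

lemma flin_rep: "flin (\<lambda>x. rep x b)"
  unfolding rep_def by (rule V.linear_representation[OF B0])

lemma rep_finite: "finite {b. rep x b \<noteq> 0}"
  unfolding rep_def by (rule V.finite_representation)

lemma rep_expand:
  assumes "finite F" "{b. rep x b \<noteq> 0} \<subseteq> F"
  shows "(\<Sum>b\<in>F. sc (rep x b) b) = x"
proof -
  have "(\<Sum>b\<in>F. sc (rep x b) b) = (\<Sum>b | rep x b \<noteq> 0. sc (rep x b) b)"
    using assms by (intro sum.mono_neutral_cong_right) auto
  also have "\<dots> = x" unfolding rep_def
    by (rule V.sum_nonzero_representation_eq) (use B0 in auto)
  finally show ?thesis .
qed

lemma sep: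
  assumes "\<And>\<phi>. flin \<phi> \<Longrightarrow> \<phi> x = \<phi> y"
  shows "x = y"
proof -
  have "rep (x - y) b = 0" for b
    using assms[OF flin_rep[of b]] flin_add[OF flin_rep[of b], of "x - y" y] by simp
  then have "{b. rep (x - y) b \<noteq> 0} = {}" by auto
  then have "(\<Sum>b\<in>{}. sc (rep (x - y) b) b) = x - y" by (intro rep_expand) auto
  then show ?thesis by simp
qed


lemma lin_zero: "lin sc f \<Longrightarrow> f 0 = 0"
  using lin_add[of f 0 0] by simp

lemma TB2:
  assumes T: "tensor2_eq sc xs ys" and l1: "\<And>y. lin sc (\<lambda>x. f x y)" and l2: "\<And>x. lin sc (f x)"
  shows "(\<Sum>(x,y)\<leftarrow>xs. f x y) = (\<Sum>(x,y)\<leftarrow>ys. f x y)"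
proof -
  define F where "F = (\<Union>x\<in>fst ` set (xs @ ys). {b. rep x b \<noteq> 0})"
  have finF: "finite F" unfolding F_def using rep_finite by auto
  have ex: "f x y = (\<Sum>b\<in>F. f b (sc (rep x b) y))" if "x \<in> fst ` set (xs @ ys)" for x y
  proof -
    have sub: "{b. rep x b \<noteq> 0} \<subseteq> F" using that unfolding F_def by auto
    have "f x y = f (\<Sum>b\<in>F. sc (rep x b) b) y"
      using rep_expand[OF finF sub] by simp
    also have "\<dots> = (\<Sum>b\<in>F. f (sc (rep x b) b) y)"
      by (rule lin_sum[OF l1[of y]])
    also have "\<dots> = (\<Sum>b\<in>F. f b (sc (rep x b) y))"
      using lin_scale[OF l1] lin_scale[OF l2] by simp
    finally show ?thesis .
  qed
  have key: "(\<Sum>(x,y)\<leftarrow>xs. sc (rep x b) y) = (\<Sum>(x,y)\<leftarrow>ys. sc (rep x b) y)" for b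
  proof (rule sep)
    fix \<chi> :: "'h \<Rightarrow> 'k" assume ch: "flin \<chi>"
    have "\<chi> (\<Sum>(x,y)\<leftarrow>zs. sc (rep x b) y) = (\<Sum>(x,y)\<leftarrow>zs. rep x b * \<chi> y)" for zs
      by (simp add: flin_sum_list[OF ch] flin_scale[OF ch] case_prod_unfold)
    then show "\<chi> (\<Sum>(x,y)\<leftarrow>xs. sc (rep x b) y) = \<chi> (\<Sum>(x,y)\<leftarrow>ys. sc (rep x b) y)"
      using T flin_rep[of b] ch unfolding tensor2_eq_def by auto
  qed
  have main: "(\<Sum>(x,y)\<leftarrow>zs. f x y) = (\<Sum>b\<in>F. f b (\<Sum>(x,y)\<leftarrow>zs. sc (rep x b) y))"
    if "set zs \<subseteq> set (xs @ ys)" for zs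
  proof -
    have "(\<Sum>(x,y)\<leftarrow>zs. f x y) = (\<Sum>(x,y)\<leftarrow>zs. \<Sum>b\<in>F. f b (sc (rep x b) y))"
      using that ex by (intro arg_cong[where f=sum_list] map_cong) force+
    also have "\<dots> = (\<Sum>b\<in>F. \<Sum>(x,y)\<leftarrow>zs. f b (sc (rep x b) y))"
      using sum_list_sum_swap[where f="\<lambda>p b. f b (sc (rep (fst p) b) (snd p))" and xs=zs and F=F]
      by (simp add: case_prod_unfold)
    also have "\<dots> = (\<Sum>b\<in>F. f b (\<Sum>(x,y)\<leftarrow>zs. sc (rep x b) y))"
      unfolding case_prod_unfold by (intro sum.cong refl) (rule lin_sum_list[OF l2, symmetric])
    finally show ?thesis .
  qed
  show ?thesis using main[of xs] main[of ys] key by simp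
qed


lemma TB3:
  assumes T: "tensor3_eq sc xs ys" and l1: "\<And>y z. lin sc (\<lambda>x. f x y z)"
    and l2: "\<And>x z. lin sc (\<lambda>y. f x y z)" and l3: "\<And>x y. lin sc (f x y)"
  shows "(\<Sum>(x,y,z)\<leftarrow>xs. f x y z) = (\<Sum>(x,y,z)\<leftarrow>ys. f x y z)"
proof -
  define F where "F = (\<Union>x\<in>fst ` set (xs @ ys). {b. rep x b \<noteq> 0})"
  have finF: "finite F" unfolding F_def using rep_finite by auto
  have ex: "f x y z = (\<Sum>b\<in>F. f b y (sc (rep x b) z))" if "x \<in> fst ` set (xs @ ys)" for x y z
  proof -
    have sub: "{b. rep x b \<noteq> 0} \<subseteq> F" using that unfolding F_def by auto
    have "f x y z = f (\<Sum>b\<in>F. sc (rep x b) b) y z"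
      using rep_expand[OF finF sub] by simp
    also have "\<dots> = (\<Sum>b\<in>F. f (sc (rep x b) b) y z)"
      by (rule lin_sum[OF l1])
    also have "\<dots> = (\<Sum>b\<in>F. f b y (sc (rep x b) z))"
      using lin_scale[OF l1] lin_scale[OF l3] by simp
    finally show ?thesis .
  qed
  define M where "M b (zs::('h \<times> 'h \<times> 'h) list) = map (\<lambda>(x,y,z). (y, sc (rep x b) z)) zs" for b zs
  have key: "tensor2_eq sc (M b xs) (M b ys)" for b
    unfolding tensor2_eq_def
  proof (intro allI impI)
    fix \<phi> \<psi> :: "'h \<Rightarrow> 'k" assume ph: "flin \<phi>" and ps: "flin \<psi>"
    have "(\<Sum>(y,z)\<leftarrow>M b zs. \<phi> y * \<psi> z) = (\<Sum>(x,y,z)\<leftarrow>zs. rep x b * \<phi> y * \<psi> z)" for zs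
      unfolding M_def by (induction zs) (auto simp: flin_scale[OF ps] case_prod_unfold)
    then show "(\<Sum>(y,z)\<leftarrow>M b xs. \<phi> y * \<psi> z) = (\<Sum>(y,z)\<leftarrow>M b ys. \<phi> y * \<psi> z)"
      using T flin_rep[of b] ph ps unfolding tensor3_eq_def by auto
  qed
  have main: "(\<Sum>(x,y,z)\<leftarrow>zs. f x y z) = (\<Sum>b\<in>F. \<Sum>(y,z)\<leftarrow>M b zs. f b y z)"
    if "set zs \<subseteq> set (xs @ ys)" for zs
  proof -
    have "(\<Sum>(x,y,z)\<leftarrow>zs. f x y z) = (\<Sum>(x,y,z)\<leftarrow>zs. \<Sum>b\<in>F. f b y (sc (rep x b) z))"
      using that ex by (intro arg_cong[where f=sum_list] map_cong) force+
    also have "\<dots> = (\<Sum>b\<in>F. \<Sum>(x,y,z)\<leftarrow>zs. f b y (sc (rep x b) z))"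
      using sum_list_sum_swap[where f="\<lambda>p b. f b (fst (snd p)) (sc (rep (fst p) b) (snd (snd p)))" and xs=zs and F=F]
      by (simp add: case_prod_unfold)
    also have "\<dots> = (\<Sum>b\<in>F. \<Sum>(y,z)\<leftarrow>M b zs. f b y z)"
      unfolding M_def by (simp add: case_prod_unfold comp_def)
    finally show ?thesis .
  qed
  have "(\<Sum>(y,z)\<leftarrow>M b xs. f b y z) = (\<Sum>(y,z)\<leftarrow>M b ys. f b y z)" for b
    by (rule TB2[OF key]) (auto intro: l2 l3)
  then show ?thesis using main[of xs] main[of ys] by simp
qed


lemma D_add: "tensor2_eq sc (D (a + b)) (D a @ D b)"
  and D_scale: "tensor2_eq sc (D (sc c a)) (map (\<lambda>(x, y). (sc c x, y)) (D a))"
  and D_mult: "tensor2_eq sc (D (a * b)) [(x * x', y * y'). (x, y) \<leftarrow> D a, (x', y') \<leftarrow> D b]"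
  and D_one: "tensor2_eq sc (D 1) [(1, 1)]"
  and coass: "tensor3_eq sc
            (concat (map (\<lambda>(x, y). map (\<lambda>(u, v). (u, v, y)) (D x)) (D a)))
            (concat (map (\<lambda>(x, y). map (\<lambda>(u, v). (x, u, v)) (D y)) (D a)))"
  and eps_lin: "flin eps"
  and eps_one: "eps 1 = 1" and eps_mult: "eps (a * b) = eps a * eps b"
  and counit_l: "(\<Sum>(x, y)\<leftarrow>D a. sc (eps x) y) = a"
  and counit_r: "(\<Sum>(x, y)\<leftarrow>D a. sc (eps y) x) = a"
  and S_linear: "Vector_Spaces.linear sc sc S"
  and anti_l: "(\<Sum>(x, y)\<leftarrow>D a. S x * y) = sc (eps a) 1"
  and anti_r: "(\<Sum>(x, y)\<leftarrow>D a. x * S y) = sc (eps a) 1"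
  and S_bij: "bij S"
  using hopf unfolding hopf_algebra_def by blast+

lemma lin_S: "lin sc S"
  using S_linear unfolding lin_def Vector_Spaces.linear_iff by blast

lemma sc_comm: "sc c (sc d x) = sc d (sc c x)"
  by (simp add: mult.commute)

lemma lin_id[intro!]: "lin sc (\<lambda>x. x)" unfolding lin_def by auto
lemma lin_mult_l[intro!]: "lin sc g \<Longrightarrow> lin sc (\<lambda>x. c * g x)"
  unfolding lin_def by (auto simp: distrib_left sc_mult_right)
lemma lin_mult_r[intro!]: "lin sc g \<Longrightarrow> lin sc (\<lambda>x. g x * c)"
  unfolding lin_def by (auto simp: distrib_right sc_mult_left)
lemma lin_Sc[intro!]: "lin sc g \<Longrightarrow> lin sc (\<lambda>x. S (g x))"
  using lin_S unfolding lin_def by auto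
lemma lin_scc[intro!]: "lin sc g \<Longrightarrow> lin sc (\<lambda>x. sc c (g x))"
  unfolding lin_def by (auto simp: V.scale_right_distrib sc_comm)
lemma lin_scf[intro!]: "flin \<phi> \<Longrightarrow> lin sc g \<Longrightarrow> lin sc (\<lambda>x. sc (\<phi> (g x)) y)"
  unfolding lin_def by (auto simp: flin_add flin_scale V.scale_left_distrib)
lemma lin_sum_list_fun[intro!]: "(\<And>u v. lin sc (G u v)) \<Longrightarrow> lin sc (\<lambda>x. \<Sum>(u,v)\<leftarrow>l. G u v x)"
  unfolding lin_def by (induction l) (auto simp: V.scale_right_distrib)
lemma lin_sum_fun[intro!]: "(\<And>u. lin sc (G u)) \<Longrightarrow> lin sc (\<lambda>x. \<Sum>u\<in>F. G u x)"
  unfolding lin_def by (induction F rule: infinite_finite_induct) (auto simp: V.scale_right_distrib sum.distrib)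

lemma lin_DL:
  assumes l1: "\<And>y. lin sc (\<lambda>x. f x y)" and l2: "\<And>x. lin sc (f x)"
  shows "lin sc (\<lambda>q. \<Sum>(x,y)\<leftarrow>D q. f x y)"
  unfolding lin_def
proof (intro conjI allI)
  fix a b
  show "(\<Sum>(x,y)\<leftarrow>D (a + b). f x y) = (\<Sum>(x,y)\<leftarrow>D a. f x y) + (\<Sum>(x,y)\<leftarrow>D b. f x y)"
    using TB2[OF D_add l1 l2] by simp
next
  fix c a
  have "(\<Sum>(x,y)\<leftarrow>D (sc c a). f x y) = (\<Sum>(x,y)\<leftarrow>map (\<lambda>(x, y). (sc c x, y)) (D a). f x y)"
    using TB2[OF D_scale l1 l2] .
  also have "\<dots> = (\<Sum>(x,y)\<leftarrow>D a. sc c (f x y))"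
    using lin_scale[OF l1] by (simp add: case_prod_unfold comp_def)
  also have "\<dots> = sc c (\<Sum>(x,y)\<leftarrow>D a. f x y)"
    unfolding case_prod_unfold by (rule lin_sum_list[OF lin_scc[OF lin_id], symmetric])
  finally show "(\<Sum>(x,y)\<leftarrow>D (sc c a). f x y) = sc c (\<Sum>(x,y)\<leftarrow>D a. f x y)" .
qed

lemma lin_DLc[intro!]:
  assumes "\<And>y. lin sc (\<lambda>x. f x y)" "\<And>x. lin sc (f x)" "lin sc g"
  shows "lin sc (\<lambda>q. \<Sum>(x,y)\<leftarrow>D (g q). f x y)"
  using lin_DL[OF assms(1,2)] assms(3) unfolding lin_def by auto

lemma MUL:
  assumes l1: "\<And>y. lin sc (\<lambda>x. f x y)" and l2: "\<And>x. lin sc (f x)"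
  shows "(\<Sum>(x,y)\<leftarrow>D (a * b). f x y) = (\<Sum>(x,y)\<leftarrow>D a. \<Sum>(x',y')\<leftarrow>D b. f (x * x') (y * y'))"
  using TB2[OF D_mult l1 l2] by (simp add: sum_list_concat_map case_prod_unfold comp_def)

lemma DONE:
  assumes l1: "\<And>y. lin sc (\<lambda>x. f x y)" and l2: "\<And>x. lin sc (f x)"
  shows "(\<Sum>(x,y)\<leftarrow>D 1. f x y) = f 1 1"
  using TB2[OF D_one l1 l2] by simp

lemma COA:
  assumes l1: "\<And>y z. lin sc (\<lambda>x. f x y z)"
    and l2: "\<And>x z. lin sc (\<lambda>y. f x y z)" and l3: "\<And>x y. lin sc (f x y)"
  shows "(\<Sum>(x,y)\<leftarrow>D a. \<Sum>(u,v)\<leftarrow>D x. f u v y) = (\<Sum>(x,y)\<leftarrow>D a. \<Sum>(u,v)\<leftarrow>D y. f x u v)"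
  using TB3[OF coass l1 l2 l3] by (simp add: sum_list_concat_map case_prod_unfold comp_def)


lemma T2swap:
  fixes f :: "'a \<Rightarrow> 'b \<Rightarrow> 'c \<Rightarrow> 'd \<Rightarrow> 'e::comm_monoid_add"
  shows "(\<Sum>(x,y)\<leftarrow>l1. \<Sum>(u,v)\<leftarrow>l2. f x y u v) = (\<Sum>(u,v)\<leftarrow>l2. \<Sum>(x,y)\<leftarrow>l1. f x y u v)"
  using sum_list_swap[where f="\<lambda>p q. f (fst p) (snd p) (fst q) (snd q)" and xs=l1 and ys=l2]
  by (simp add: case_prod_unfold)

lemma T2cong:
  "(\<And>x y. (x,y) \<in> set l \<Longrightarrow> f x y = g x y) \<Longrightarrow> (\<Sum>(x,y)\<leftarrow>l. f x y) = (\<Sum>(x,y)\<leftarrow>l. g x y)"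
  by (intro arg_cong[where f=sum_list] map_cong) auto

lemma CU_r: "lin sc g \<Longrightarrow> g a = (\<Sum>(x,y)\<leftarrow>D a. sc (eps y) (g x))"
proof -
  assume g: "lin sc g"
  have "g a = g (\<Sum>(x, y)\<leftarrow>D a. sc (eps y) x)" by (simp add: counit_r)
  also have "\<dots> = (\<Sum>(x,y)\<leftarrow>D a. sc (eps y) (g x))"
    unfolding case_prod_unfold by (simp add: lin_sum_list[OF g] lin_scale[OF g])
  finally show ?thesis .
qed

lemma CU_l: "lin sc g \<Longrightarrow> g a = (\<Sum>(x,y)\<leftarrow>D a. sc (eps x) (g y))"
proof -
  assume g: "lin sc g"
  have "g a = g (\<Sum>(x, y)\<leftarrow>D a. sc (eps x) y)" by (simp add: counit_l)
  also have "\<dots> = (\<Sum>(x,y)\<leftarrow>D a. sc (eps x) (g y))"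
    unfolding case_prod_unfold by (simp add: lin_sum_list[OF g] lin_scale[OF g])
  finally show ?thesis .
qed

lemma sc_one_mult: "sc c 1 * x = sc c x" by (metis sc_mult_left mult_1)
lemma mult_sc_one: "x * sc c 1 = sc c x" by (metis sc_mult_right mult_1_right)

lemma sum_mult_l: fixes P :: 'h shows "(\<Sum>(x,y)\<leftarrow>l. P * f x y) = P * (\<Sum>(x,y)\<leftarrow>l. f x y)"
  by (induction l) (auto simp: distrib_left)
lemma sum_mult_r: fixes P :: 'h shows "(\<Sum>(x,y)\<leftarrow>l. f x y * P) = (\<Sum>(x,y)\<leftarrow>l. f x y) * P"
  by (induction l) (auto simp: distrib_right)

lemma ANTI_L_pull: "(\<Sum>(x,y)\<leftarrow>D c. P * S x * (y * W)) = sc (eps c) (P * W)"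
proof -
  have "(\<Sum>(x,y)\<leftarrow>D c. P * S x * (y * W)) = (\<Sum>(x,y)\<leftarrow>D c. P * (S x * y) * W)"
    by (simp add: mult.assoc)
  also have "\<dots> = P * (\<Sum>(x,y)\<leftarrow>D c. S x * y) * W"
    by (simp add: sum_mult_l sum_mult_r)
  also have "\<dots> = sc (eps c) (P * W)"
    by (simp add: anti_l mult_sc_one sc_mult_left sc_one_mult sc_mult_right mult.assoc)
  finally show ?thesis .
qed

lemma S_one: "S 1 = 1"
proof -
  have "(\<Sum>(x,y)\<leftarrow>D 1. S x * y) = S 1 * 1"
    by (rule DONE) auto
  then show ?thesis using anti_l[of 1] eps_one by simp
qed



end


context hopf begin
lemma S_antimult: "S (a * b) = S b * S a"
proof -
  have i1: "S b1 * S a1 = (\<Sum>(b1',b2)\<leftarrow>D b1. sc (eps b2) (S b1' * S a1))" for b1 a1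
    by (rule CU_r[OF lin_mult_r[OF lin_Sc[OF lin_id]]])
  have i2: "sc (eps a2) (\<Sum>(b1,b2)\<leftarrow>D b. sc (eps b2) (S b1 * S a1))
      = (\<Sum>(b1,b2)\<leftarrow>D b. S b1 * S a1 * sc (eps (a2 * b2)) 1)" for a1 a2
    unfolding case_prod_unfold
    by (simp add: lin_sum_list[OF lin_scc[OF lin_id]] eps_mult mult_sc_one)
  have i3: "S b1 * S a1 * sc (eps c) 1 =
      (\<Sum>(c1,c2)\<leftarrow>D c. S b1 * S a1 * (c1 * S c2))" for b1 a1 c
    by (simp add: anti_r sum_mult_l)
  have "S b * S a = (\<Sum>(a1,a2)\<leftarrow>D a. sc (eps a2) (S b * S a1))"
    by (rule CU_r[OF lin_mult_l[OF lin_Sc[OF lin_id]]])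
  also have "\<dots> = (\<Sum>(a1,a2)\<leftarrow>D a. sc (eps a2) (\<Sum>(b1,b2)\<leftarrow>D b. sc (eps b2) (S b1 * S a1)))"
    by (simp only: i1[of b])
  also have "\<dots> = (\<Sum>(a1,a2)\<leftarrow>D a. \<Sum>(b1,b2)\<leftarrow>D b. S b1 * S a1 * sc (eps (a2 * b2)) 1)"
    by (simp only: i2)
  also have "\<dots> = (\<Sum>(a1,a2)\<leftarrow>D a. \<Sum>(b1,b2)\<leftarrow>D b. \<Sum>(c1,c2)\<leftarrow>D (a2 * b2). S b1 * S a1 * (c1 * S c2))"
    by (simp only: i3)
  also have "\<dots> = (\<Sum>(a1,a2)\<leftarrow>D a. \<Sum>(b1,b2)\<leftarrow>D b. \<Sum>(a21,a22)\<leftarrow>D a2. \<Sum>(b21,b22)\<leftarrow>D b2.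
        S b1 * S a1 * (a21 * b21 * S (a22 * b22)))"
    by (intro T2cong MUL) auto
  also have "\<dots> = (\<Sum>(a1,a2)\<leftarrow>D a. \<Sum>(a21,a22)\<leftarrow>D a2. \<Sum>(b1,b2)\<leftarrow>D b. \<Sum>(b21,b22)\<leftarrow>D b2.
        S b1 * S a1 * (a21 * b21 * S (a22 * b22)))"
    by (intro T2cong T2swap)
  also have "\<dots> = (\<Sum>(a1,a2)\<leftarrow>D a. \<Sum>(a11,a12)\<leftarrow>D a1. \<Sum>(b1,b2)\<leftarrow>D b. \<Sum>(b21,b22)\<leftarrow>D b2.
        S b1 * S a11 * (a12 * b21 * S (a2 * b22)))"
    by (rule COA[symmetric]) auto
  also have "\<dots> = (\<Sum>(b1,b2)\<leftarrow>D b. \<Sum>(b21,b22)\<leftarrow>D b2. \<Sum>(a1,a2)\<leftarrow>D a. \<Sum>(a11,a12)\<leftarrow>D a1.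
        S b1 * S a11 * (a12 * b21 * S (a2 * b22)))"
    (is "?L = ?R")
  proof -
    have "?L = (\<Sum>(a1,a2)\<leftarrow>D a. \<Sum>(b1,b2)\<leftarrow>D b. \<Sum>(a11,a12)\<leftarrow>D a1. \<Sum>(b21,b22)\<leftarrow>D b2.
        S b1 * S a11 * (a12 * b21 * S (a2 * b22)))" by (intro T2cong T2swap)
    also have "\<dots> = (\<Sum>(b1,b2)\<leftarrow>D b. \<Sum>(a1,a2)\<leftarrow>D a. \<Sum>(a11,a12)\<leftarrow>D a1. \<Sum>(b21,b22)\<leftarrow>D b2.
        S b1 * S a11 * (a12 * b21 * S (a2 * b22)))" by (rule T2swap)
    also have "\<dots> = (\<Sum>(b1,b2)\<leftarrow>D b. \<Sum>(a1,a2)\<leftarrow>D a. \<Sum>(b21,b22)\<leftarrow>D b2. \<Sum>(a11,a12)\<leftarrow>D a1.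
        S b1 * S a11 * (a12 * b21 * S (a2 * b22)))" by (intro T2cong T2swap)
    also have "\<dots> = ?R" by (intro T2cong T2swap)
    finally show ?thesis .
  qed
  also have "\<dots> = (\<Sum>(b1,b2)\<leftarrow>D b. \<Sum>(b11,b12)\<leftarrow>D b1. \<Sum>(a1,a2)\<leftarrow>D a. \<Sum>(a11,a12)\<leftarrow>D a1.
        S b11 * S a11 * (a12 * b12 * S (a2 * b2)))"
    by (rule COA[symmetric]) auto
  also have "\<dots> = (\<Sum>(b1,b2)\<leftarrow>D b. \<Sum>(b11,b12)\<leftarrow>D b1. \<Sum>(a1,a2)\<leftarrow>D a.
        sc (eps a1) (S b11 * (b12 * S (a2 * b2))))"
    using ANTI_L_pull[where P="S b11" and W="b12 * S (a2 * b2)" for b11 b12 a2 b2]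
    by (simp add: mult.assoc)
  also have "\<dots> = (\<Sum>(b1,b2)\<leftarrow>D b. \<Sum>(b11,b12)\<leftarrow>D b1. S b11 * (b12 * S (a * b2)))"
    using CU_l[where g="\<lambda>x. S b11 * (b12 * S (x * b2))" and a=a for b11 b12 b2]
    by (simp add: lin_mult_l lin_mult_r lin_Sc lin_id)
  also have "\<dots> = (\<Sum>(b1,b2)\<leftarrow>D b. sc (eps b1) (S (a * b2)))"
    using ANTI_L_pull[where P=1 and W="S (a * b2)" for b2] by simp
  also have "\<dots> = S (a * b)"
    using CU_l[where g="\<lambda>x. S (a * x)" and a=b] by (simp add: lin_mult_l lin_Sc lin_id)
  finally show ?thesis ..
qed

end


context hopf begin

definition T where "T = inv S"
lemma S_T: "S (T x) = x" unfolding T_def using S_bij by (simp add: bij_def surj_f_inv_f)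
lemma T_S: "T (S x) = x" unfolding T_def using S_bij by (simp add: bij_def inv_f_f)
lemma S_inj: "S x = S y \<Longrightarrow> x = y" using S_bij by (metis T_S)
lemma lin_T: "lin sc T"
  unfolding lin_def
proof (intro conjI allI)
  fix x y show "T (x + y) = T x + T y"
    by (rule S_inj) (simp add: S_T lin_add[OF lin_S])
next
  fix c x show "T (sc c x) = sc c (T x)"
    by (rule S_inj) (simp add: S_T lin_scale[OF lin_S])
qed

lemma N1: "(\<Sum>(x,y)\<leftarrow>D h. y * T x) = sc (eps h) 1"
proof (rule S_inj)
  have "S (\<Sum>(x,y)\<leftarrow>D h. y * T x) = (\<Sum>(x,y)\<leftarrow>D h. S (y * T x))"
    unfolding case_prod_unfold by (rule lin_sum_list[OF lin_S])
  also have "\<dots> = (\<Sum>(x,y)\<leftarrow>D h. x * S y)"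
    by (simp add: S_antimult S_T)
  also have "\<dots> = S (sc (eps h) 1)"
    by (simp add: anti_r lin_scale[OF lin_S] S_one)
  finally show "S (\<Sum>(x,y)\<leftarrow>D h. y * T x) = S (sc (eps h) 1)" .
qed

lemma span_sum_list: "(\<And>t. t \<in> set l \<Longrightarrow> g t \<in> V.span X) \<Longrightarrow> (\<Sum>t\<leftarrow>l. g t) \<in> V.span X"
  by (induction l) (auto intro: V.span_add V.span_zero)

lemma lin_span_image: assumes f: "lin sc f" and w: "w \<in> V.span X" shows "f w \<in> V.span (f ` X)"
proof -
  have "V.subspace {w. f w \<in> V.span (f ` X)}"
    by (rule V.subspaceI) (auto simp: lin_zero[OF f] lin_add[OF f] lin_scale[OF f]
        intro: V.span_zero V.span_add V.span_scale)
  moreover have "X \<subseteq> {w. f w \<in> V.span (f ` X)}" by (auto intro: V.span_base)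
  ultimately have "V.span X \<subseteq> {w. f w \<in> V.span (f ` X)}" by (rule V.span_minimal[rotated])
  then show ?thesis using w by auto
qed

lemma EXPAND:
  assumes l1: "\<And>y. lin sc (\<lambda>x. g x y)" and l2: "\<And>x. lin sc (g x)"
    and finF: "finite F" and sub: "\<And>x. x \<in> fst ` set l \<Longrightarrow> {b. rep x b \<noteq> 0} \<subseteq> F"
  shows "(\<Sum>(x,y)\<leftarrow>l. g x y) = (\<Sum>b\<in>F. g b (\<Sum>(x,y)\<leftarrow>l. sc (rep x b) y))"
proof -
  have ex: "g x y = (\<Sum>b\<in>F. g b (sc (rep x b) y))" if "x \<in> fst ` set l" for x y
  proof -
    have "g x y = g (\<Sum>b\<in>F. sc (rep x b) b) y"
      using rep_expand[OF finF sub[OF that]] by simp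
    also have "\<dots> = (\<Sum>b\<in>F. g (sc (rep x b) b) y)"
      by (rule lin_sum[OF l1])
    also have "\<dots> = (\<Sum>b\<in>F. g b (sc (rep x b) y))"
      using lin_scale[OF l1] lin_scale[OF l2] by simp
    finally show ?thesis .
  qed
  have "(\<Sum>(x,y)\<leftarrow>l. g x y) = (\<Sum>(x,y)\<leftarrow>l. \<Sum>b\<in>F. g b (sc (rep x b) y))"
    using ex by (intro arg_cong[where f=sum_list] map_cong) force+
  also have "\<dots> = (\<Sum>b\<in>F. \<Sum>(x,y)\<leftarrow>l. g b (sc (rep x b) y))"
    using sum_list_sum_swap[where f="\<lambda>p b. g b (sc (rep (fst p) b) (snd p))" and xs=l and F=F]
    by (simp add: case_prod_unfold)
  also have "\<dots> = (\<Sum>b\<in>F. g b (\<Sum>(x,y)\<leftarrow>l. sc (rep x b) y))"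
    unfolding case_prod_unfold by (intro sum.cong refl) (rule lin_sum_list[OF l2, symmetric])
  finally show ?thesis .
qed

end


context hopf begin

lemma flin_comp: assumes p: "flin \<phi>" and g: "lin sc g" shows "flin (\<lambda>x. \<phi> (g x))"
proof -
  have "vector_space ((*) :: 'k \<Rightarrow> 'k \<Rightarrow> 'k)" using p unfolding Vector_Spaces.linear_iff by blast
  then show ?thesis unfolding Vector_Spaces.linear_iff
    using vs flin_add[OF p] flin_scale[OF p] lin_add[OF g] lin_scale[OF g] by auto
qed

lemma rep_nonzero: "x \<noteq> 0 \<Longrightarrow> \<exists>b. rep x b \<noteq> 0"
  using rep_expand[of "{}" x] by auto

lemma core:
  fixes m :: "'h \<Rightarrow> 'h \<Rightarrow> 'h" and Sg Tg :: "'h \<Rightarrow> 'h" and A :: "'h set" and \<mu> :: "'h \<Rightarrow> 'k" and \<Lambda> :: 'h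
  assumes ml1: "\<And>y. lin sc (\<lambda>x. m x y)" and ml2: "\<And>x. lin sc (m x)"
    and massoc: "\<And>x y z. m (m x y) z = m x (m y z)"
    and mMUL: "\<And>a b (f::'h\<Rightarrow>'h\<Rightarrow>'h). (\<And>y. lin sc (\<lambda>x. f x y)) \<Longrightarrow> (\<And>x. lin sc (f x)) \<Longrightarrow>
        (\<Sum>(x,y)\<leftarrow>D (m a b). f x y) = (\<Sum>(x,y)\<leftarrow>D a. \<Sum>(x',y')\<leftarrow>D b. f (m x x') (m y y'))"
    and Sgl: "lin sc Sg" and Tgl: "lin sc Tg"
    and antiS: "\<And>p. (\<Sum>(x,y)\<leftarrow>D p. m (Sg x) y) = sc (eps p) 1"
    and antiT: "\<And>p. (\<Sum>(x,y)\<leftarrow>D p. m y (Tg x)) = sc (eps p) 1"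
    and mone_l: "\<And>c x. m (sc c 1) x = sc c x" and mone_r: "\<And>c x. m x (sc c 1) = sc c x"
    and coid: "\<And>a. a \<in> A \<Longrightarrow> \<exists>ts. tensor2_eq sc (D a) ts \<and> (\<forall>(x,y)\<in>set ts. y \<in> A)"
    and LA: "\<Lambda> \<in> A" "\<Lambda> \<noteq> 0" and Lmu: "\<And>q. q \<in> A \<Longrightarrow> m q \<Lambda> = sc (\<mu> q) \<Lambda>"
  shows "\<exists>F. finite F \<and> A \<subseteq> V.span F"
proof -
  have mi1[intro!]: "lin sc g \<Longrightarrow> lin sc (\<lambda>x. m (g x) c)" for g c
    using ml1[of c] unfolding lin_def by auto
  have mi2[intro!]: "lin sc g \<Longrightarrow> lin sc (\<lambda>x. m c (g x))" for g c
    using ml2[of c] unfolding lin_def by auto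
  have Sgi[intro!]: "lin sc g \<Longrightarrow> lin sc (\<lambda>x. Sg (g x))" for g
    using Sgl unfolding lin_def by auto
  have Tgi[intro!]: "lin sc g \<Longrightarrow> lin sc (\<lambda>x. Tg (g x))" for g
    using Tgl unfolding lin_def by auto
  obtain tsL where tsL: "tensor2_eq sc (D \<Lambda>) tsL" "\<forall>(x,y)\<in>set tsL. y \<in> A"
    using coid[OF LA(1)] by blast
  define Y0 where "Y0 = snd ` set tsL"
  have finY0: "finite Y0" unfolding Y0_def by auto
  have inY: "(\<Sum>(x,y)\<leftarrow>D \<Lambda>. sc (\<kappa> x) y) \<in> V.span Y0" if k: "flin \<kappa>" for \<kappa>
  proof -
    have "(\<Sum>(x,y)\<leftarrow>D \<Lambda>. sc (\<kappa> x) y) = (\<Sum>(x,y)\<leftarrow>tsL. sc (\<kappa> x) y)"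
      by (rule TB2[OF tsL(1)]) (auto intro!: lin_scf[OF k])
    also have "\<dots> \<in> V.span Y0"
      unfolding case_prod_unfold Y0_def
      by (rule span_sum_list, rule V.span_scale, rule V.span_base) auto
    finally show ?thesis .
  qed
  have star: "m a (\<Sum>(x,y)\<leftarrow>D \<Lambda>. sc (\<phi> x) y) \<in> V.span Y0" if a: "a \<in> A" and ph: "flin \<phi>" for a \<phi>
  proof -
    obtain tsa where tsa: "tensor2_eq sc (D a) tsa" "\<forall>(x,y)\<in>set tsa. y \<in> A"
      using coid[OF a] by blast
    define X where "X = (\<Sum>(p,q)\<leftarrow>tsa. \<Sum>(x,y)\<leftarrow>D (m q \<Lambda>). sc (\<phi> (m (Sg p) x)) y)"
    have X1: "X \<in> V.span Y0"
      unfolding X_def case_prod_unfold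
    proof (rule span_sum_list)
      fix t assume t: "t \<in> set tsa"
      then have q: "snd t \<in> A" using tsa(2) by auto
      have "(\<Sum>(x,y)\<leftarrow>D (m (snd t) \<Lambda>). sc (\<phi> (m (Sg (fst t)) x)) y)
          = (\<Sum>(x,y)\<leftarrow>D (sc (\<mu> (snd t)) \<Lambda>). sc (\<phi> (m (Sg (fst t)) x)) y)"
        using Lmu[OF q] by simp
      also have "\<dots> = sc (\<mu> (snd t)) (\<Sum>(x,y)\<leftarrow>D \<Lambda>. sc (\<phi> (m (Sg (fst t)) x)) y)"
        by (rule lin_scale[OF lin_DL]) (auto intro!: lin_scf[OF ph])
      also have "\<dots> \<in> V.span Y0"
        by (intro V.span_scale inY flin_comp[OF ph]) auto
      finally show "(\<Sum>p\<leftarrow>D (m (snd t) \<Lambda>). sc (\<phi> (m (Sg (fst t)) (fst p))) (snd p)) \<in> V.span Y0"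
        by (simp add: case_prod_unfold)
    qed
    have inner1: "(\<Sum>(p1,p2)\<leftarrow>D p. sc (\<phi> (m (Sg p1) (m p2 x))) z) = sc (eps p * \<phi> x) z" for p x z
    proof -
      have G: "lin sc (\<lambda>w. sc (\<phi> (m w x)) z)" by (auto intro!: lin_scf[OF ph])
      have "(\<Sum>(p1,p2)\<leftarrow>D p. sc (\<phi> (m (Sg p1) (m p2 x))) z)
          = (\<Sum>(p1,p2)\<leftarrow>D p. sc (\<phi> (m (m (Sg p1) p2) x)) z)" by (simp add: massoc)
      also have "\<dots> = sc (\<phi> (m (\<Sum>(p1,p2)\<leftarrow>D p. m (Sg p1) p2) x)) z"
        unfolding case_prod_unfold by (rule lin_sum_list[OF G, symmetric])
      also have "\<dots> = sc (eps p * \<phi> x) z"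
        by (simp add: antiS mone_l flin_scale[OF ph])
      finally show ?thesis .
    qed
    have "X = (\<Sum>(p,q)\<leftarrow>D a. \<Sum>(x,y)\<leftarrow>D (m q \<Lambda>). sc (\<phi> (m (Sg p) x)) y)"
      unfolding X_def by (rule TB2[OF tsa(1), symmetric]) (auto intro!: lin_scf[OF ph])
    also have "\<dots> = (\<Sum>(p,q)\<leftarrow>D a. \<Sum>(q1,q2)\<leftarrow>D q. \<Sum>(x,y)\<leftarrow>D \<Lambda>.
        sc (\<phi> (m (Sg p) (m q1 x))) (m q2 y))"
      by (intro T2cong mMUL) (auto intro!: lin_scf[OF ph])
    also have "\<dots> = (\<Sum>(p,q)\<leftarrow>D a. \<Sum>(p1,p2)\<leftarrow>D p. \<Sum>(x,y)\<leftarrow>D \<Lambda>.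
        sc (\<phi> (m (Sg p1) (m p2 x))) (m q y))"
      by (rule COA[symmetric]) (auto intro!: lin_scf[OF ph])
    also have "\<dots> = (\<Sum>(p,q)\<leftarrow>D a. \<Sum>(x,y)\<leftarrow>D \<Lambda>. \<Sum>(p1,p2)\<leftarrow>D p.
        sc (\<phi> (m (Sg p1) (m p2 x))) (m q y))"
      by (intro T2cong T2swap)
    also have "\<dots> = (\<Sum>(p,q)\<leftarrow>D a. \<Sum>(x,y)\<leftarrow>D \<Lambda>. sc (eps p * \<phi> x) (m q y))"
      by (simp only: inner1)
    also have "\<dots> = m a (\<Sum>(x,y)\<leftarrow>D \<Lambda>. sc (\<phi> x) y)"
    proof -
      have G: "lin sc (\<lambda>w. \<Sum>(x,y)\<leftarrow>D \<Lambda>. sc (\<phi> x) (m w y))" by auto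
      have "m a (\<Sum>(x,y)\<leftarrow>D \<Lambda>. sc (\<phi> x) y) = (\<Sum>(x,y)\<leftarrow>D \<Lambda>. sc (\<phi> x) (m a y))"
        unfolding case_prod_unfold by (simp add: lin_sum_list[OF ml2] lin_scale[OF ml2])
      also have "\<dots> = (\<Sum>(p,q)\<leftarrow>D a. sc (eps p) (\<Sum>(x,y)\<leftarrow>D \<Lambda>. sc (\<phi> x) (m q y)))"
        by (rule CU_l[OF G])
      also have "\<dots> = (\<Sum>(p,q)\<leftarrow>D a. \<Sum>(x,y)\<leftarrow>D \<Lambda>. sc (eps p * \<phi> x) (m q y))"
        unfolding case_prod_unfold by (simp add: lin_sum_list[OF lin_scc[OF lin_id]])
      finally show ?thesis ..
    qed
    finally show ?thesis using X1 by simp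
  qed
  obtain b0 where b0: "rep \<Lambda> b0 \<noteq> 0" using rep_nonzero[OF LA(2)] by blast
  define \<psi> where "\<psi> = (\<lambda>x. rep x b0)"
  have ps: "flin \<psi>" unfolding \<psi>_def by (rule flin_rep)
  define Fin where "Fin = (\<Union>x\<in>fst ` set tsL. {b. rep x b \<noteq> 0})"
  have finFin: "finite Fin" unfolding Fin_def using rep_finite by auto
  define F where "F = (\<Union>e\<in>Fin. \<Union>t\<in>set (D e). (\<lambda>y. m y (Tg (snd t))) ` Y0)"
  have finF: "finite F" unfolding F_def using finFin finY0 by auto
  have "A \<subseteq> V.span F"
  proof
    fix a assume a: "a \<in> A"
    define Z where "Z = (\<Sum>(x,y)\<leftarrow>D \<Lambda>. \<Sum>(u,v)\<leftarrow>D y. sc (\<psi> x) (m (m a v) (Tg u)))"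
    have innerZ: "(\<Sum>(u,v)\<leftarrow>D y. sc (\<psi> x) (m (m a v) (Tg u))) = sc (\<psi> x) (sc (eps y) a)" for x y
    proof -
      have G: "lin sc (\<lambda>w. sc (\<psi> x) (m a w))" by auto
      have "(\<Sum>(u,v)\<leftarrow>D y. sc (\<psi> x) (m (m a v) (Tg u))) = (\<Sum>(u,v)\<leftarrow>D y. sc (\<psi> x) (m a (m v (Tg u))))"
        by (simp add: massoc)
      also have "\<dots> = sc (\<psi> x) (m a (\<Sum>(u,v)\<leftarrow>D y. m v (Tg u)))"
        unfolding case_prod_unfold by (rule lin_sum_list[OF G, symmetric])
      also have "\<dots> = sc (\<psi> x) (sc (eps y) a)" by (simp add: antiT mone_r)
      finally show ?thesis .
    qed
    have Z1: "Z = sc (\<psi> \<Lambda>) a"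
    proof -
      have add: "sc (c1 + c2) a = sc c1 a + sc c2 a" for c1 c2 by (rule V.scale_left_distrib)
      have "Z = (\<Sum>(x,y)\<leftarrow>D \<Lambda>. sc (\<psi> x) (sc (eps y) a))" unfolding Z_def by (simp only: innerZ)
      also have "\<dots> = (\<Sum>(x,y)\<leftarrow>D \<Lambda>. sc (eps y * \<psi> x) a)" by (simp add: mult.commute)
      also have "\<dots> = sc (\<Sum>(x,y)\<leftarrow>D \<Lambda>. eps y * \<psi> x) a"
        unfolding case_prod_unfold by (rule additive_sum_list[where g="\<lambda>c. sc c a", OF add, symmetric])
      also have "(\<Sum>(x,y)\<leftarrow>D \<Lambda>. eps y * \<psi> x) = \<psi> \<Lambda>"
        using flin_sum_list[OF ps, of "\<lambda>t. sc (eps (snd t)) (fst t)" "D \<Lambda>"] counit_r[of \<Lambda>]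
        by (simp add: case_prod_unfold flin_scale[OF ps])
      finally show ?thesis .
    qed
    define g where "g x y = (\<Sum>(u,v)\<leftarrow>D x. sc (\<psi> u) (m (m a y) (Tg v)))" for x y
    have g1: "lin sc (\<lambda>x. g x y)" for y unfolding g_def by (auto intro!: lin_scf[OF ps])
    have g2: "lin sc (g x)" for x unfolding g_def by auto
    have "Z = (\<Sum>(x,y)\<leftarrow>D \<Lambda>. \<Sum>(u,v)\<leftarrow>D x. sc (\<psi> u) (m (m a y) (Tg v)))"
      unfolding Z_def
      by (rule COA[where f="\<lambda>x u v. sc (\<psi> x) (m (m a v) (Tg u))" and a=\<Lambda>, symmetric])
        (auto intro!: lin_scf[OF ps])
    also have "\<dots> = (\<Sum>(x,y)\<leftarrow>D \<Lambda>. g x y)" unfolding g_def ..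
    also have "\<dots> = (\<Sum>(x,y)\<leftarrow>tsL. g x y)" by (rule TB2[OF tsL(1) g1 g2])
    also have "\<dots> = (\<Sum>e\<in>Fin. g e (\<Sum>(x,y)\<leftarrow>tsL. sc (rep x e) y))"
      by (rule EXPAND[OF g1 g2 finFin]) (auto simp: Fin_def)
    also have "\<dots> \<in> V.span F"
    proof (rule V.span_sum)
      fix e assume e: "e \<in> Fin"
      have "(\<Sum>(x,y)\<leftarrow>tsL. sc (rep x e) y) = (\<Sum>(x,y)\<leftarrow>D \<Lambda>. sc (rep x e) y)"
        by (rule TB2[OF tsL(1), symmetric]) (auto intro!: lin_scf[OF flin_rep])
      moreover have w: "m a (\<Sum>(x,y)\<leftarrow>D \<Lambda>. sc (rep x e) y) \<in> V.span Y0"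
        by (rule star[OF a flin_rep])
      ultimately have w': "m a (\<Sum>(x,y)\<leftarrow>tsL. sc (rep x e) y) \<in> V.span Y0" by simp
      show "g e (\<Sum>(x,y)\<leftarrow>tsL. sc (rep x e) y) \<in> V.span F"
        unfolding g_def case_prod_unfold
      proof (rule span_sum_list, rule V.span_scale)
        fix t assume t: "t \<in> set (D e)"
        have "m (m a (\<Sum>(x,y)\<leftarrow>tsL. sc (rep x e) y)) (Tg (snd t)) \<in> V.span ((\<lambda>y. m y (Tg (snd t))) ` Y0)"
          by (rule lin_span_image[OF ml1 w'])
        also have "\<dots> \<subseteq> V.span F"
          by (rule V.span_mono) (use e t in \<open>auto simp: F_def\<close>)
        finally show "m (m a (\<Sum>p\<leftarrow>tsL. sc (rep (fst p) e) (snd p))) (Tg (snd t)) \<in> V.span F"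
          by (simp add: case_prod_unfold)
      qed
    qed
    finally have "sc (\<psi> \<Lambda>) a \<in> V.span F" using Z1 by simp
    then have "sc (inverse (\<psi> \<Lambda>)) (sc (\<psi> \<Lambda>) a) \<in> V.span F" by (rule V.span_scale)
    then show "a \<in> V.span F" using b0 by (simp add: \<psi>_def)
  qed
  then show ?thesis using finF by blast
qed

end



theorem mainTheorem8:
  fixes sc :: "'k::field \<Rightarrow> 'h::ring_1 \<Rightarrow> 'h"
    and D :: "'h \<Rightarrow> ('h \<times> 'h) list"
    and eps :: "'h \<Rightarrow> 'k"
    and S :: "'h \<Rightarrow> 'h"
    and A :: "'h set"
    and \<mu> :: "'h \<Rightarrow> 'k"
  assumes "hopf_algebra sc D eps S"
    and "left_coideal_subalgebra sc D A"
    and "multiplicative_functional sc A \<mu>"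
    and "\<exists>a\<in>A. \<mu> a \<noteq> 0"
    and "(\<exists>\<Lambda>\<in>L_space sc A \<mu>. \<Lambda> \<noteq> 0) \<or> (\<exists>\<Lambda>\<in>R_space sc A \<mu>. \<Lambda> \<noteq> 0)"
  shows "finite_dim sc A"
proof -
  interpret hopf sc D eps S by unfold_locales (rule assms(1))
  have sub: "V.subspace A" using assms(2) unfolding left_coideal_subalgebra_def by blast
  have coid: "\<And>a. a \<in> A \<Longrightarrow> \<exists>ts. tensor2_eq sc (D a) ts \<and> (\<forall>(x,y)\<in>set ts. y \<in> A)"
    using assms(2) unfolding left_coideal_subalgebra_def by blast
  have "\<exists>F. finite F \<and> A \<subseteq> V.span F"
    using assms(5)
  proof
    assume "\<exists>\<Lambda>\<in>L_space sc A \<mu>. \<Lambda> \<noteq> 0"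
    then obtain \<Lambda> where L: "\<Lambda> \<in> A" "\<Lambda> \<noteq> 0" "\<And>q. q \<in> A \<Longrightarrow> q * \<Lambda> = sc (\<mu> q) \<Lambda>"
      unfolding L_space_def by blast
    show ?thesis
    proof (rule core[where m="(*)" and Sg=S and Tg=T and \<Lambda>=\<Lambda> and \<mu>=\<mu> and A=A])
      show "\<And>a b f. (\<And>y. lin sc (\<lambda>x. f x y)) \<Longrightarrow> (\<And>x. lin sc (f x)) \<Longrightarrow>
        (\<Sum>(x,y)\<leftarrow>D (a * b). f x y) = (\<Sum>(x,y)\<leftarrow>D a. \<Sum>(x',y')\<leftarrow>D b. f (x * x') (y * y'))"
        by (rule MUL)
    qed (auto simp: lin_S lin_T anti_l N1 sc_one_mult mult_sc_one mult.assoc coid L)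
  next
    assume "\<exists>\<Lambda>\<in>R_space sc A \<mu>. \<Lambda> \<noteq> 0"
    then obtain \<Lambda> where L: "\<Lambda> \<in> A" "\<Lambda> \<noteq> 0" "\<And>q. q \<in> A \<Longrightarrow> \<Lambda> * q = sc (\<mu> q) \<Lambda>"
      unfolding R_space_def by blast
    show ?thesis
    proof (rule core[where m="\<lambda>x y. y * x" and Sg=T and Tg=S and \<Lambda>=\<Lambda> and \<mu>=\<mu> and A=A])
      show "(\<Sum>(x,y)\<leftarrow>D (b * a). f x y) = (\<Sum>(x,y)\<leftarrow>D a. \<Sum>(x',y')\<leftarrow>D b. f (x' * x) (y' * y))"
        if "\<And>y. lin sc (\<lambda>x. f x y)" "\<And>x. lin sc (f x)" for a b f
      proof -
        have "(\<Sum>(x,y)\<leftarrow>D (b * a). f x y) = (\<Sum>(x',y')\<leftarrow>D b. \<Sum>(x,y)\<leftarrow>D a. f (x' * x) (y' * y))"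
          by (rule MUL[OF that])
        also have "\<dots> = (\<Sum>(x,y)\<leftarrow>D a. \<Sum>(x',y')\<leftarrow>D b. f (x' * x) (y' * y))"
          by (rule T2swap)
        finally show ?thesis .
      qed
    qed (auto simp: lin_S lin_T anti_l N1 sc_one_mult mult_sc_one mult.assoc coid L)
  qed
  then obtain F where F: "finite F" "A \<subseteq> V.span F" by blast
  obtain B where B: "B \<subseteq> A" "V.independent B" "A \<subseteq> V.span B"
    using V.maximal_independent_subset[of A] by blast
  have "finite B" using V.independent_span_bound[OF F(1) B(2)] B(1) F(2) by blast
  moreover have "V.span B = A"
    using V.span_minimal[OF B(1) sub] B(3) by blast
  ultimately show ?thesis unfolding finite_dim_def using B(1) by blast
qed


end
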